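(* Let $N=[n]$, let $v:2^N\to\mathbb{R}_+$ be any monotone valuation with $v(\emptyset)=0$, and let $X$ be a maximal decision map for $v$. Let $p\in\mathbb{R}^n_+$, $S=X(p)$ and $\epsilon>0$, and define $p^\epsilon$ by $p^\epsilon_i=\max\{p_i-\frac{\epsilon}{n},0\}$ for $i\in S$ and $p^\epsilon_i=p_i$ for $i\notin S$. Then for any decision map $X'$ for $v$, the set $S^\epsilon=X'(p^\epsilon)$ satisfies $S\cap\{j:p_j>0\}\subseteq S^\epsilon\subseteq S$.
   Context: For $p\in\mathbb{R}^n_+$, $p(S)=\sum_{j\in S}p_j$ and $D(v;p)=\arg\max_{S\subseteq N}(v(S)-p(S))$. A decision map is $X:\mathbb{R}^n_+\to2^N$ with $X(p)\in D(v;p)$ for all $p$; it is maximal if for every $p$ there is no $S'\in D(v;p)$ with $X(p)\subsetneq S'$. The map $X'$ need not be maximal. *)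

theory Defs
  imports Complex_Main
begin

text \<open>The ground set N = [n] is modelled by a finite type 'a (N = UNIV, n = CARD('a)).
  Price vectors in R^n_+ are functions p :: 'a \<Rightarrow> real with all p i \<ge> 0.\<close>

definition price_sum :: "('a \<Rightarrow> real) \<Rightarrow> 'a set \<Rightarrow> real" where
  "price_sum p S = (\<Sum>j\<in>S. p j)"

definition nonneg_prices :: "('a \<Rightarrow> real) \<Rightarrow> bool" where
  "nonneg_prices p \<longleftrightarrow> (\<forall>i. 0 \<le> p i)"

definition demand :: "('a set \<Rightarrow> real) \<Rightarrow> ('a \<Rightarrow> real) \<Rightarrow> 'a set set" where
  "demand v p = {S. \<forall>T. v T - price_sum p T \<le> v S - price_sum p S}"

definition monotone_valuation :: "('a set \<Rightarrow> real) \<Rightarrow> bool" where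
  "monotone_valuation v \<longleftrightarrow> v {} = 0 \<and> (\<forall>S. 0 \<le> v S) \<and> (\<forall>S T. S \<subseteq> T \<longrightarrow> v S \<le> v T)"

definition decision_map :: "('a set \<Rightarrow> real) \<Rightarrow> (('a \<Rightarrow> real) \<Rightarrow> 'a set) \<Rightarrow> bool" where
  "decision_map v X \<longleftrightarrow> (\<forall>p. nonneg_prices p \<longrightarrow> X p \<in> demand v p)"

definition maximal_decision_map :: "('a set \<Rightarrow> real) \<Rightarrow> (('a \<Rightarrow> real) \<Rightarrow> 'a set) \<Rightarrow> bool" where
  "maximal_decision_map v X \<longleftrightarrow> decision_map v X \<and>
     (\<forall>p. nonneg_prices p \<longrightarrow> \<not> (\<exists>S' \<in> demand v p. X p \<subset> S'))"

end

theory Submission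
  imports Defs
begin

theorem mainTheorem18:
  fixes v :: "'a::finite set \<Rightarrow> real"
    and X X' :: "('a \<Rightarrow> real) \<Rightarrow> 'a set"
    and p :: "'a \<Rightarrow> real"
    and \<epsilon> :: real
  assumes "monotone_valuation v"
    and "maximal_decision_map v X"
    and "decision_map v X'"
    and "nonneg_prices p"
    and "\<epsilon> > 0"
  shows "let S = X p;
             p\<epsilon> = (\<lambda>i. if i \<in> S then max (p i - \<epsilon> / real (card (UNIV :: 'a set))) 0 else p i)
         in S \<inter> {j. p j > 0} \<subseteq> X' p\<epsilon> \<and> X' p\<epsilon> \<subseteq> S"
proof -
  define S where "S = X p"
  define \<delta> where "\<delta> = \<epsilon> / real (card (UNIV :: 'a set))"
  define q where "q = (\<lambda>i. if i \<in> S then max (p i - \<delta>) 0 else p i)"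
  define T where "T = X' q"
  define d where "d = (\<lambda>i. p i - q i)"
  have pn: "\<And>i. 0 \<le> p i" using assms(4) by (simp add: nonneg_prices_def)
  have dpos: "\<delta> > 0" using assms(5) unfolding \<delta>_def by (simp add: card_gt_0_iff)
  have qn: "nonneg_prices q" unfolding nonneg_prices_def q_def using pn by auto
  have d0: "\<And>i. 0 \<le> d i" unfolding d_def q_def using pn dpos by auto
  have dout: "\<And>i. i \<notin> S \<Longrightarrow> d i = 0" unfolding d_def q_def by auto
  have dgt: "\<And>i. i \<in> S \<Longrightarrow> p i > 0 \<Longrightarrow> d i > 0" unfolding d_def q_def using dpos by auto
  have split: "\<And>R. price_sum p R = price_sum q R + sum d R"
    unfolding price_sum_def d_def by (simp add: sum.distrib[symmetric])
  have dR: "\<And>R. sum d R = sum d (R \<inter> S)"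
    by (rule sum.mono_neutral_right) (auto simp: dout)
  have Sd: "S \<in> demand v p" using assms(2) assms(4) unfolding S_def maximal_decision_map_def decision_map_def by auto
  have Td: "T \<in> demand v q" using assms(3) qn unfolding T_def decision_map_def by auto
  have i1: "v S - price_sum q S \<le> v T - price_sum q T" using Td unfolding demand_def by auto
  have i2: "v T - price_sum p T \<le> v S - price_sum p S" using Sd unfolding demand_def by auto
  have dS: "sum d S = sum d (T \<inter> S) + sum d (S - T)"
    by (metis Int_commute Diff_eq sum.Int_Diff finite)
  have "sum d (S - T) \<le> 0" using i1 i2 split[of S] split[of T] dR[of T] dS by linarith
  hence "sum d (S - T) = 0" using d0 by (meson order_antisym sum_nonneg)
  hence dz: "\<And>i. i \<in> S - T \<Longrightarrow> d i = 0" using d0 by (simp add: sum_nonneg_eq_0_iff)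
  have pz: "\<And>i. i \<in> S - T \<Longrightarrow> p i = 0" using dz dgt pn by (metis DiffD1 less_eq_real_def less_irrefl)
  have uT: "v S - price_sum p S \<le> v T - price_sum p T"
  proof -
    have "sum d T \<le> sum d S" using dR[of T] dS d0 by (simp add: sum_nonneg)
    thus ?thesis using i1 split[of S] split[of T] by linarith
  qed
  have pST: "price_sum p (S \<union> T) = price_sum p T"
  proof -
    have "S \<union> T = T \<union> (S - T)" by auto
    hence "price_sum p (S \<union> T) = price_sum p T + price_sum p (S - T)"
      unfolding price_sum_def by (metis Un_Diff_cancel sum.union_disjoint finite Diff_disjoint)
    moreover have "price_sum p (S - T) = 0" unfolding price_sum_def using pz by simp
    ultimately show ?thesis by simp
  qed
  have "v T \<le> v (S \<union> T)" using assms(1) unfolding monotone_valuation_def by auto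
  hence mono: "v T \<le> v (S \<union> T)" .
  have "S \<union> T \<in> demand v p" unfolding demand_def
  proof (intro CollectI allI)
    fix R
    note mono
    moreover have "v R - price_sum p R \<le> v S - price_sum p S" using Sd unfolding demand_def by blast
    ultimately show "v R - price_sum p R \<le> v (S \<union> T) - price_sum p (S \<union> T)" using uT pST by linarith
  qed
  moreover have "\<not> (\<exists>S' \<in> demand v p. S \<subset> S')" using assms(2) assms(4) unfolding maximal_decision_map_def S_def by blast
  ultimately have "\<not> S \<subset> S \<union> T" by blast
  hence sub: "T \<subseteq> S" by auto
  have sup: "S \<inter> {j. p j > 0} \<subseteq> T"
  proof
    fix i assume "i \<in> S \<inter> {j. p j > 0}"
    hence "i \<in> S" "p i > 0" by auto
    thus "i \<in> T" using pz[of i] by auto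
  qed
  show ?thesis using sub sup unfolding Let_def S_def[symmetric] \<delta>_def[symmetric] q_def[symmetric] T_def[symmetric] by simp
qed

end
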